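(* Let $S$ be a monoid such that the word $xy$ ($x\ne y$) is an isoterm for $S$. Suppose that $S$ satisfies an identity $\mathbf u\approx\mathbf v$ and that there are a substitution $\Theta:\mathfrak A\to\mathfrak A^+$ and a variable $x$ that occurs exactly twice in both $\mathbf U=\Theta(\mathbf u)$ and $\mathbf V=\Theta(\mathbf v)$. Then $l_{\mathbf u,\mathbf v}(\Theta^{-1}_{\mathbf u}({}_{1\mathbf U}x))=\Theta^{-1}_{\mathbf v}({}_{1\mathbf V}x)$ and $l_{\mathbf u,\mathbf v}(\Theta^{-1}_{\mathbf u}({}_{2\mathbf U}x))=\Theta^{-1}_{\mathbf v}({}_{2\mathbf V}x)$.
   Context: $\mathfrak A$ is a countably infinite alphabet of variables; words are elements of $\mathfrak A^+$; a substitution is a homomorphism $\Theta:\mathfrak A^+\to\mathfrak A^+$. A monoid $S$ satisfies $\mathbf u\approx\mathbf v$ if both sides agree under all evaluations in $S$; a word is an isoterm for $S$ if it forms no nontrivial identity of $S$. ${}_{i\mathbf w}z$ denotes the $i$-th occurrence of $z$ in $\mathbf w$, and $\mathrm{occ}_{\mathbf w}(z)$ the number of occurrences. $l_{\mathbf u,\mathbf v}$ is the map ${}_{i\mathbf u}z\mapsto{}_{i\mathbf v}z$ for $i\le\min(\mathrm{occ}_{\mathbf u}(z),\mathrm{occ}_{\mathbf v}(z))$. If $\mathbf u=a_1\cdots a_k$ (letters) and $\mathbf U=\Theta(\mathbf u)=\Theta(a_1)\cdots\Theta(a_k)$, then each occurrence $c$ of a variable in $\mathbf U$ lies in a unique block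 $\Theta(a_j)$; $\Theta^{-1}_{\mathbf u}(c)$ is defined as the occurrence in $\mathbf u$ given by the $j$-th letter $a_j$. *)

theory Defs
  imports Main
begin

text \<open>An occurrence of a variable is encoded as a pair
  (z, i), meaning the i-th occurrence of z (i counted from 1).\<close>

type_synonym var = nat
type_synonym word = "var list"
type_synonym occurrence = "var \<times> nat"

definition is_word :: "word \<Rightarrow> bool" where
  "is_word w \<longleftrightarrow> w \<noteq> []"

definition is_subst :: "(var \<Rightarrow> word) \<Rightarrow> bool" where
  "is_subst \<Theta> \<longleftrightarrow> (\<forall>a. \<Theta> a \<noteq> [])"

definition apply_subst :: "(var \<Rightarrow> word) \<Rightarrow> word \<Rightarrow> word" where
  "apply_subst \<Theta> w = concat (map \<Theta> w)"

definition eval_word :: "(var \<Rightarrow> 'a::monoid_mult) \<Rightarrow> word \<Rightarrow> 'a" where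
  "eval_word \<phi> w = prod_list (map \<phi> w)"

definition satisfies :: "'a::monoid_mult itself \<Rightarrow> word \<Rightarrow> word \<Rightarrow> bool" where
  "satisfies S u v \<longleftrightarrow> (\<forall>\<phi> :: var \<Rightarrow> 'a. eval_word \<phi> u = eval_word \<phi> v)"

definition isoterm :: "'a::monoid_mult itself \<Rightarrow> word \<Rightarrow> bool" where
  "isoterm S w \<longleftrightarrow> (\<forall>w'. is_word w' \<longrightarrow> satisfies S w w' \<longrightarrow> w' = w)"

definition occ :: "word \<Rightarrow> var \<Rightarrow> nat" where
  "occ w z = count_list w z"

definition occ_at :: "word \<Rightarrow> nat \<Rightarrow> occurrence" where
  "occ_at w p = (w ! p, count_list (take (Suc p) w) (w ! p))"

definition pos_of_occ :: "word \<Rightarrow> occurrence \<Rightarrow> nat" where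
  "pos_of_occ w c = (THE p. p < length w \<and> occ_at w p = c)"

definition block_index :: "(var \<Rightarrow> word) \<Rightarrow> word \<Rightarrow> nat \<Rightarrow> nat" where
  "block_index \<Theta> u p = (THE j. j < length u \<and>
      length (apply_subst \<Theta> (take j u)) \<le> p \<and>
      p < length (apply_subst \<Theta> (take (Suc j) u)))"

definition theta_inv :: "(var \<Rightarrow> word) \<Rightarrow> word \<Rightarrow> occurrence \<Rightarrow> occurrence" where
  "theta_inv \<Theta> u c = occ_at u (block_index \<Theta> u (pos_of_occ (apply_subst \<Theta> u) c))"

definition l_map :: "word \<Rightarrow> word \<Rightarrow> occurrence \<Rightarrow> occurrence option" where
  "l_map u v c = (if 1 \<le> snd c \<and> snd c \<le> min (occ u (fst c)) (occ v (fst c))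
                  then Some c else None)"

end

theory Submission imports Defs begin

lemma count_take_mono: "m \<le> n \<Longrightarrow> count_list (take m w) z \<le> count_list (take n w) z"
proof -
  assume "m \<le> n"
  have "take n w = take m (take n w) @ drop m (take n w)" by (rule append_take_drop_id[symmetric])
  also have "take m (take n w) = take m w" using \<open>m \<le> n\<close> by (simp add: min_def)
  finally show ?thesis by (metis count_list_append le_add1)
qed

lemma occ_at_inj:
  assumes "p < length w" "q < length w" "occ_at w p = occ_at w q" shows "p = q"
proof (rule ccontr)
  assume ne: "p \<noteq> q"
  have e: "w ! p = w ! q" "count_list (take (Suc p) w) (w!p) = count_list (take (Suc q) w) (w!q)"
    using assms(3) by (auto simp: occ_at_def)
  have gen: "count_list (take (Suc p) w) (w!p) < count_list (take (Suc q) w) (w!q)"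
    if "p < q" "q < length w" "w!p = w!q" for p q
  proof -
    have "count_list (take (Suc q) w) (w!q) = count_list (take q w) (w!q) + 1"
      using that by (simp add: take_Suc_conv_app_nth)
    moreover have "count_list (take (Suc p) w) (w!q) \<le> count_list (take q w) (w!q)"
      using that by (intro count_take_mono) simp
    ultimately show ?thesis using that by simp
  qed
  show False
  proof (cases "p < q")
    case True then show ?thesis using gen[of p q] e assms by simp
  next
    case False then have "q < p" using ne by simp
    then show ?thesis using gen[of q p] e assms by simp
  qed
qed

lemma pos_of_occ_eq: "p < length w \<Longrightarrow> occ_at w p = c \<Longrightarrow> pos_of_occ w c = p"
  unfolding pos_of_occ_def by (rule the_equality) (auto intro: occ_at_inj)

lemma occ_at_split: "occ_at (A @ z # B) (length A) = (z, count_list A z + 1)"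
  by (simp add: occ_at_def nth_append take_append)

lemma apply_append[simp]: "apply_subst \<Theta> (xs @ ys) = apply_subst \<Theta> xs @ apply_subst \<Theta> ys"
  by (simp add: apply_subst_def)

lemma apply_take_mono: "m \<le> n \<Longrightarrow> length (apply_subst \<Theta> (take m u)) \<le> length (apply_subst \<Theta> (take n u))"
proof -
  assume "m \<le> n"
  have "take n u = take m (take n u) @ drop m (take n u)" by (rule append_take_drop_id[symmetric])
  also have "take m (take n u) = take m u" using \<open>m \<le> n\<close> by (simp add: min_def)
  finally show ?thesis by (metis apply_append length_append le_add1)
qed

lemma block_index_eq:
  assumes u: "u = u1 @ t # u2"
    and p: "length (apply_subst \<Theta> u1) \<le> p" "p < length (apply_subst \<Theta> u1) + length (\<Theta> t)"
  shows "block_index \<Theta> u p = length u1"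
  unfolding block_index_def
proof (rule the_equality)
  have t1: "take (length u1) u = u1" "take (Suc (length u1)) u = u1 @ [t]" using u by auto
  show "length u1 < length u \<and> length (apply_subst \<Theta> (take (length u1) u)) \<le> p \<and>
    p < length (apply_subst \<Theta> (take (Suc (length u1)) u))"
    using t1 p u by (simp add: apply_subst_def)
  fix j assume j: "j < length u \<and> length (apply_subst \<Theta> (take j u)) \<le> p \<and>
    p < length (apply_subst \<Theta> (take (Suc j) u))"
  show "j = length u1"
  proof (rule ccontr)
    assume "j \<noteq> length u1"
    then consider "Suc j \<le> length u1" | "Suc (length u1) \<le> j" by linarith
    then show False
    proof cases
      case 1
      from apply_take_mono[OF 1, of \<Theta> u] j t1 p show False by simp
    next
      case 2
      from apply_take_mono[OF 2, of \<Theta> u] j t1 p show False by (simp add: apply_subst_def)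
    qed
  qed
qed

lemma theta_inv_eq:
  assumes "u = u1 @ t # u2" "\<Theta> t = D @ x # E"
  shows "theta_inv \<Theta> u (x, count_list (apply_subst \<Theta> u1 @ D) x + 1) = (t, count_list u1 t + 1)"
proof -
  let ?A = "apply_subst \<Theta> u1 @ D"
  have U: "apply_subst \<Theta> u = ?A @ x # (E @ apply_subst \<Theta> u2)"
    using assms by (simp add: apply_subst_def)
  have pos: "pos_of_occ (apply_subst \<Theta> u) (x, count_list ?A x + 1) = length ?A"
    unfolding U apply (rule pos_of_occ_eq) apply simp by (rule occ_at_split)
  have bi: "block_index \<Theta> u (length ?A) = length u1"
    by (rule block_index_eq[OF assms(1)]) (simp_all add: assms(2))
  show ?thesis unfolding theta_inv_def pos bi using assms(1) by (simp add: occ_at_split)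
qed

lemma locate:
  "concat (map \<Theta> u) = A @ x # B \<Longrightarrow>
   \<exists>u1 t u2 D E. u = u1 @ t # u2 \<and> \<Theta> t = D @ x # E \<and> A = concat (map \<Theta> u1) @ D"
proof (induction u arbitrary: A)
  case Nil then show ?case by simp
next
  case (Cons y u)
  have "\<Theta> y @ concat (map \<Theta> u) = A @ x # B" using Cons.prems by simp
  then obtain us where
    "(\<Theta> y = A @ us \<and> us @ concat (map \<Theta> u) = x # B) \<or> (\<Theta> y @ us = A \<and> concat (map \<Theta> u) = us @ x # B)"
    by (auto simp: append_eq_append_conv2)
  then show ?case
  proof (elim disjE conjE)
    assume h: "\<Theta> y = A @ us" "us @ concat (map \<Theta> u) = x # B"
    show ?case
    proof (cases us)
      case Nil
      with h have "concat (map \<Theta> u) = [] @ x # B" by simp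
      from Cons.IH[OF this] obtain u1 t u2 D E where
        "u = u1 @ t # u2" "\<Theta> t = D @ x # E" "[] = concat (map \<Theta> u1) @ D" by blast
      then show ?thesis using h Nil
        by (intro exI[of _ "y # u1"] exI[of _ t] exI[of _ u2] exI[of _ D] exI[of _ E]) auto
    next
      case (Cons c us')
      with h show ?thesis
        by (intro exI[of _ "[]"] exI[of _ y] exI[of _ u] exI[of _ A] exI[of _ us']) auto
    qed
  next
    assume h: "\<Theta> y @ us = A" "concat (map \<Theta> u) = us @ x # B"
    from Cons.IH[OF h(2)] obtain u1 t u2 D E where
      "u = u1 @ t # u2" "\<Theta> t = D @ x # E" "us = concat (map \<Theta> u1) @ D" by blast
    then show ?thesis using h
      by (intro exI[of _ "y # u1"] exI[of _ t] exI[of _ u2] exI[of _ D] exI[of _ E]) auto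
  qed
qed

lemma split_ith: "1 \<le> i \<Longrightarrow> i \<le> count_list w x \<Longrightarrow> \<exists>A B. w = A @ x # B \<and> count_list A x = i - 1"
proof (induction w arbitrary: i)
  case Nil then show ?case by simp
next
  case (Cons y w)
  show ?case
  proof (cases "y = x")
    case True
    show ?thesis
    proof (cases "i = 1")
      case True with \<open>y = x\<close> show ?thesis by (intro exI[of _ "[]"] exI[of _ w]) auto
    next
      case False
      with Cons.prems \<open>y = x\<close> have "1 \<le> i - 1" "i - 1 \<le> count_list w x" by auto
      from Cons.IH[OF this] obtain A B where "w = A @ x # B" "count_list A x = i - 1 - 1" by blast
      then show ?thesis using \<open>y = x\<close> False Cons.prems
        by (intro exI[of _ "y # A"] exI[of _ B]) auto
    qed
  next
    case False
    with Cons.prems have "1 \<le> i" "i \<le> count_list w x" by auto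
    from Cons.IH[OF this] obtain A B where "w = A @ x # B" "count_list A x = i - 1" by blast
    then show ?thesis using False by (intro exI[of _ "y # A"] exI[of _ B]) auto
  qed
qed

lemma key:
  assumes "1 \<le> i" "i \<le> count_list (apply_subst \<Theta> u) x"
  shows "\<exists>u1 t u2 D E. u = u1 @ t # u2 \<and> \<Theta> t = D @ x # E \<and>
     count_list (apply_subst \<Theta> u1) x + count_list D x = i - 1 \<and>
     theta_inv \<Theta> u (x, i) = (t, count_list u1 t + 1)"
proof -
  obtain A B where AB: "apply_subst \<Theta> u = A @ x # B" "count_list A x = i - 1"
    using split_ith[OF assms] by blast
  from locate[of \<Theta> u A x B] AB(1) obtain u1 t u2 D E where
    L: "u = u1 @ t # u2" "\<Theta> t = D @ x # E" "A = concat (map \<Theta> u1) @ D"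
    by (auto simp: apply_subst_def)
  have ci: "count_list (apply_subst \<Theta> u1 @ D) x + 1 = i"
    using AB(2) L(3) assms(1) by (simp add: apply_subst_def)
  have "theta_inv \<Theta> u (x, i) = (t, count_list u1 t + 1)"
    using theta_inv_eq[of u u1 t u2 \<Theta> D x E, OF L(1) L(2)] ci by simp
  then show ?thesis using L AB(2) by (intro exI[of _ u1] exI[of _ t] exI[of _ u2] exI[of _ D] exI[of _ E])
     (auto simp: apply_subst_def)
qed


lemma small_lists_eq:
  fixes fu fv :: "nat list"
  assumes "1 \<le> length fu" "length fu \<le> 2" "1 \<le> length fv" "length fv \<le> 2"
    and H0: "\<And>z. z \<in> set fu \<union> set fv \<Longrightarrow> (count_list fu z = 0 \<longleftrightarrow> count_list fv z = 0)"
    and H1: "\<And>z. z \<in> set fu \<union> set fv \<Longrightarrow> (count_list fu z = 1 \<longleftrightarrow> count_list fv z = 1)"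
    and H2: "\<And>t s. t \<noteq> s \<Longrightarrow> fu = [t, s] \<Longrightarrow> fv \<noteq> [s, t]"
  shows "fu = fv"
proof -
  obtain p fu' where fu: "fu = p # fu'" "length fu' \<le> 1" using assms(1,2) by (cases fu) auto
  obtain r fv' where fv: "fv = r # fv'" "length fv' \<le> 1" using assms(3,4) by (cases fv) auto
  show ?thesis
  proof (cases fu')
    case Nil
    note n1 = this
    show ?thesis
    proof (cases fv')
      case Nil
      then show ?thesis using fu fv n1 H1[of p] by (auto split: if_splits)
    next
      case (Cons s fv'')
      then have "fv'' = []" using fv by simp
      then show ?thesis using fu fv n1 Cons H0[of r] H0[of s] H1[of p]
        by (auto split: if_splits)
    qed
  next
    case (Cons q fu'')
    then have fu2: "fu = [p, q]" using fu by simp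
    show ?thesis
    proof (cases fv')
      case Nil
      then show ?thesis using fu2 fv H0[of p] H0[of q] H1[of r]
        by (auto split: if_splits)
    next
      case (Cons s fv'')
      then have fv2: "fv = [r, s]" using fv by simp
      show ?thesis using fu2 fv2 H0[of p] H0[of q] H1[of p] H1[of q] H0[of r] H0[of s]
          H1[of r] H1[of s] H2[of p q]
        by (auto split: if_splits)
    qed
  qed
qed


lemma eval_filter:
  assumes "\<And>z. \<not> Q z \<Longrightarrow> \<psi> z = 1"
  shows "eval_word \<psi> w = prod_list (map \<psi> (filter Q w))"
  unfolding eval_word_def using assms by (induction w) auto

lemma filter_eq_rep: "filter (\<lambda>z. z = t) w = replicate (count_list w t) t"
  by (induction w) auto

lemma sat_pow:
  fixes S :: "'a::monoid_mult itself" and c :: 'a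
  assumes "satisfies S u v"
  shows "c ^ count_list u t = c ^ count_list v t"
proof -
  let ?\<psi> = "\<lambda>z. if z = t then c else (1::'a)"
  have "eval_word ?\<psi> u = eval_word ?\<psi> v" using assms unfolding satisfies_def by blast
  moreover have "eval_word ?\<psi> w = c ^ count_list w t" for w
    by (subst eval_filter[where Q = "\<lambda>z. z = t"]) (auto simp: filter_eq_rep prod_list_replicate
      cong: map_cong)
  ultimately show ?thesis by simp
qed

lemma sat_sym: "satisfies S u v \<Longrightarrow> satisfies S v u"
  unfolding satisfies_def by metis

lemma iso_zero:
  fixes S :: "'a::monoid_mult itself"
  assumes iso: "isoterm S [a, b]" and sat: "satisfies S u v" and z: "count_list u t = 0"
  shows "count_list v t = 0"
proof (rule ccontr)
  assume "count_list v t \<noteq> 0"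
  then obtain k where k: "count_list v t = Suc k" by (cases "count_list v t") auto
  let ?w = "replicate (Suc (Suc k)) a @ [b]"
  have "satisfies S [a, b] ?w"
    unfolding satisfies_def
  proof
    fix \<phi> :: "var \<Rightarrow> 'a"
    have "1 = \<phi> a ^ Suc k" using sat_pow[OF sat, of "\<phi> a" t] z k by simp
    then have "\<phi> a ^ Suc (Suc k) = \<phi> a" by (metis mult_1_right power_Suc)
    then show "eval_word \<phi> [a, b] = eval_word \<phi> ?w"
      by (simp add: eval_word_def prod_list_replicate del: replicate.simps power.simps)
  qed
  with iso have "?w = [a, b]" unfolding isoterm_def is_word_def by blast
  then show False by simp
qed

lemma iso_one:
  fixes S :: "'a::monoid_mult itself"
  assumes iso: "isoterm S [a, b]" and sat: "satisfies S u v" and z: "count_list u t = 1"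
  shows "count_list v t = 1"
proof (rule ccontr)
  assume ne: "count_list v t \<noteq> 1"
  have "count_list v t \<noteq> 0" using iso_zero[OF iso sat_sym[OF sat], of t] z by auto
  with ne obtain k where k: "count_list v t = Suc (Suc k)"
    by (cases "count_list v t"; cases "count_list v t - 1") auto
  let ?w = "replicate (Suc (Suc k)) a @ [b]"
  have "satisfies S [a, b] ?w"
    unfolding satisfies_def
  proof
    fix \<phi> :: "var \<Rightarrow> 'a"
    have "\<phi> a ^ Suc (Suc k) = \<phi> a" using sat_pow[OF sat, of "\<phi> a" t] z k by simp
    then show "eval_word \<phi> [a, b] = eval_word \<phi> ?w"
      by (simp add: eval_word_def prod_list_replicate del: replicate.simps power.simps)
  qed
  with iso have "?w = [a, b]" unfolding isoterm_def is_word_def by blast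
  then show False by simp
qed

lemma iso_order:
  fixes S :: "'a::monoid_mult itself"
  assumes ab: "a \<noteq> b" and iso: "isoterm S [a, b]" and sat: "satisfies S u v" and ts: "t \<noteq> s"
    and fu: "filter (\<lambda>z. z = t \<or> z = s) u = [t, s]"
    and fv: "filter (\<lambda>z. z = t \<or> z = s) v = [s, t]"
  shows False
proof -
  have "satisfies S [a, b] [b, a]"
    unfolding satisfies_def
  proof
    fix \<phi> :: "var \<Rightarrow> 'a"
    let ?\<psi> = "\<lambda>z. if z = t then \<phi> a else if z = s then \<phi> b else (1::'a)"
    have "eval_word ?\<psi> u = eval_word ?\<psi> v" using sat unfolding satisfies_def by blast
    moreover have ef: "eval_word ?\<psi> w = prod_list (map ?\<psi> (filter (\<lambda>z. z = t \<or> z = s) w))" for w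
      by (rule eval_filter) auto
    ultimately have "prod_list (map ?\<psi> [t, s]) = prod_list (map ?\<psi> [s, t])"
      by (simp only: ef fu fv)
    then show "eval_word \<phi> [a, b] = eval_word \<phi> [b, a]"
      using ts by (simp add: eval_word_def)
  qed
  with iso have "[b, a] = [a, b]" unfolding isoterm_def is_word_def by blast
  with ab show False by simp
qed


definition Rf :: "nat list \<Rightarrow> nat \<Rightarrow> occurrence" where
  "Rf fu i = (if length fu = 1 then (hd fu, 1) else if i = 1 then (fu!0, 1)
     else (fu!1, if fu!1 = fu!0 then 2 else 1))"

lemma count_apply_filter:
  "count_list (apply_subst \<Theta> w) x =
   sum_list (map (\<lambda>t. count_list (\<Theta> t) x) (filter (\<lambda>t. x \<in> set (\<Theta> t)) w))"
  by (induction w) (auto simp: apply_subst_def count_list_0_iff)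

lemma len_filter_le:
  "length (filter (\<lambda>t. x \<in> set (\<Theta> t)) w) \<le> count_list (apply_subst \<Theta> w) x"
proof (induction w)
  case Nil then show ?case by (simp add: apply_subst_def)
next
  case (Cons y w)
  have "x \<in> set (\<Theta> y) \<Longrightarrow> 1 \<le> count_list (\<Theta> y) x"
    by (metis count_list_0_iff less_one not_le)
  then show ?case using Cons by (auto simp: apply_subst_def)
qed

lemma count_filter_P: "P t \<Longrightarrow> count_list (filter P w) t = count_list w t"
  by (induction w) auto

lemma theta_R:
  assumes c2: "count_list (apply_subst \<Theta> u) x = 2" and i: "i = 1 \<or> i = 2"
  shows "theta_inv \<Theta> u (x, i) = Rf (filter (\<lambda>t. x \<in> set (\<Theta> t)) u) i"
proof -
  let ?P = "\<lambda>t. x \<in> set (\<Theta> t)"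
  have "1 \<le> i" "i \<le> count_list (apply_subst \<Theta> u) x" using c2 i by auto
  from key[OF this] obtain u1 t u2 D E where
    K: "u = u1 @ t # u2" "\<Theta> t = D @ x # E"
       "count_list (apply_subst \<Theta> u1) x + count_list D x = i - 1"
       "theta_inv \<Theta> u (x, i) = (t, count_list u1 t + 1)" by blast
  have Pt: "?P t" using K(2) by simp
  have fu: "filter ?P u = filter ?P u1 @ t # filter ?P u2" using K(1) Pt by simp
  have cu1: "count_list u1 t = count_list (filter ?P u1) t" using count_filter_P[of ?P t u1] Pt by simp
  have l1: "length (filter ?P u1) \<le> count_list (apply_subst \<Theta> u1) x" by (rule len_filter_le)
  have l2: "length (filter ?P u2) \<le> count_list (apply_subst \<Theta> u2) x" by (rule len_filter_le)
  have tot: "count_list (apply_subst \<Theta> u1) x + (count_list D x + 1 + count_list E x)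
      + count_list (apply_subst \<Theta> u2) x = 2"
    using c2 K(1,2) by (simp add: apply_subst_def)
  have sum1: "count_list (apply_subst \<Theta> u1) x = sum_list (map (\<lambda>t. count_list (\<Theta> t) x) (filter ?P u1))"
    by (rule count_apply_filter)
  show ?thesis
  proof (cases "filter ?P u1")
    case Nil
    then have c10: "count_list (apply_subst \<Theta> u1) x = 0" using sum1 by simp
    show ?thesis
    proof (cases "filter ?P u2")
      case Nil
      then show ?thesis using fu K(4) cu1 \<open>filter ?P u1 = []\<close> by (simp add: Rf_def)
    next
      case (Cons s r)
      then have "count_list (apply_subst \<Theta> u2) x \<ge> 1" using l2 by simp
      then have "count_list D x = 0" "i = 1" using tot c10 K(3) i by auto
      then show ?thesis using fu K(4) cu1 \<open>filter ?P u1 = []\<close> Cons by (simp add: Rf_def)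
    qed
  next
    case (Cons r rs)
    then have "count_list (apply_subst \<Theta> u1) x \<ge> 1" using l1 by simp
    then have c11: "count_list (apply_subst \<Theta> u1) x = 1" "count_list D x = 0" using tot by auto
    then have "i = 2" using K(3) i by auto
    have "length (filter ?P u1) \<le> 1" using l1 c11 by simp
    then have "rs = []" using Cons by simp
    have "length (filter ?P u2) = 0" using l2 tot c11 by simp
    then show ?thesis using fu K(4) cu1 Cons \<open>rs = []\<close> \<open>i = 2\<close> by (simp add: Rf_def)
  qed
qed

lemma theta_valid:
  assumes "1 \<le> i" "i \<le> count_list (apply_subst \<Theta> u) x"
  shows "1 \<le> snd (theta_inv \<Theta> u (x, i)) \<and>
         snd (theta_inv \<Theta> u (x, i)) \<le> count_list u (fst (theta_inv \<Theta> u (x, i)))"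
proof -
  from key[OF assms] obtain u1 t u2 D E where
    K: "u = u1 @ t # u2" "theta_inv \<Theta> u (x, i) = (t, count_list u1 t + 1)" by blast
  then show ?thesis by simp
qed

theorem lemma4p3:
  fixes S :: "'a::monoid_mult itself"
    and a b x :: var and u v :: word and \<Theta> :: "var \<Rightarrow> word"
  assumes "a \<noteq> b" and "isoterm S [a, b]"
    and "is_word u" and "is_word v"
    and "satisfies S u v"
    and "is_subst \<Theta>"
    and "occ (apply_subst \<Theta> u) x = 2"
    and "occ (apply_subst \<Theta> v) x = 2"
  shows "l_map u v (theta_inv \<Theta> u (x, 1)) = Some (theta_inv \<Theta> v (x, 1)) \<and>
         l_map u v (theta_inv \<Theta> u (x, 2)) = Some (theta_inv \<Theta> v (x, 2))"
proof -
  let ?P = "\<lambda>t. x \<in> set (\<Theta> t)"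
  let ?fu = "filter ?P u" and ?fv = "filter ?P v"
  have cu: "count_list (apply_subst \<Theta> u) x = 2" and cv: "count_list (apply_subst \<Theta> v) x = 2"
    using assms(7,8) by (auto simp: occ_def)
  have sat': "satisfies S v u" using assms(5) by (rule sat_sym)
  have lu: "1 \<le> length ?fu" "length ?fu \<le> 2"
  proof -
    show "length ?fu \<le> 2" using len_filter_le[of x \<Theta> u] cu by simp
    show "1 \<le> length ?fu"
    proof (rule ccontr)
      assume "\<not> 1 \<le> length ?fu" then have "?fu = []" by (cases ?fu) auto
      then show False using count_apply_filter[of \<Theta> u x] cu by simp
    qed
  qed
  have lv: "1 \<le> length ?fv" "length ?fv \<le> 2"
  proof -
    show "length ?fv \<le> 2" using len_filter_le[of x \<Theta> v] cv by simp
    show "1 \<le> length ?fv"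
    proof (rule ccontr)
      assume "\<not> 1 \<le> length ?fv" then have "?fv = []" by (cases ?fv) auto
      then show False using count_apply_filter[of \<Theta> v x] cv by simp
    qed
  qed
  have inP: "?P z" if "z \<in> set ?fu \<union> set ?fv" for z using that by auto
  have feq: "?fu = ?fv"
  proof (rule small_lists_eq[OF lu lv])
    fix z assume z: "z \<in> set ?fu \<union> set ?fv"
    have e1: "count_list ?fu z = count_list u z" "count_list ?fv z = count_list v z"
      using count_filter_P[of ?P z] inP[OF z] by auto
    show "(count_list ?fu z = 0) = (count_list ?fv z = 0)"
      unfolding e1 using iso_zero[OF assms(2) assms(5)] iso_zero[OF assms(2) sat'] by blast
    show "(count_list ?fu z = 1) = (count_list ?fv z = 1)"
      unfolding e1 using iso_one[OF assms(2) assms(5)] iso_one[OF assms(2) sat'] by blast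
  next
    fix t s assume ts: "t \<noteq> s" "?fu = [t, s]"
    show "?fv \<noteq> [s, t]"
    proof
      assume fv: "?fv = [s, t]"
      have Pts: "?P t" "?P s" using inP[of t] inP[of s] ts(2) by auto
      have "filter (\<lambda>z. z = t \<or> z = s) u = filter (\<lambda>z. z = t \<or> z = s) ?fu"
        using Pts by (simp add: filter_filter) (metis (mono_tags, lifting))
      also have "\<dots> = [t, s]" using ts by simp
      finally have 1: "filter (\<lambda>z. z = t \<or> z = s) u = [t, s]" .
      have "filter (\<lambda>z. z = t \<or> z = s) v = filter (\<lambda>z. z = t \<or> z = s) ?fv"
        using Pts by (simp add: filter_filter) (metis (mono_tags, lifting))
      also have "\<dots> = [s, t]" using fv ts by simp
      finally have 2: "filter (\<lambda>z. z = t \<or> z = s) v = [s, t]" .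
      show False using iso_order[OF assms(1,2,5) ts(1) 1 2] .
    qed
  qed
  have eqi: "theta_inv \<Theta> u (x, i) = theta_inv \<Theta> v (x, i)" if "i = 1 \<or> i = 2" for i
    using theta_R[OF cu that] theta_R[OF cv that] feq by simp
  have goal: "l_map u v (theta_inv \<Theta> u (x, i)) = Some (theta_inv \<Theta> v (x, i))"
    if "i = 1 \<or> i = 2" for i
  proof -
    have i1: "1 \<le> i" "i \<le> count_list (apply_subst \<Theta> u) x" "i \<le> count_list (apply_subst \<Theta> v) x"
      using that cu cv by auto
    from theta_valid[OF i1(1,2)] theta_valid[OF i1(1,3)] eqi[OF that]
    show ?thesis by (auto simp: l_map_def occ_def)
  qed
  show ?thesis using goal[of 1] goal[of 2] by simp
qed

end
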